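(* Let $q$ be a prime power and $(\delta_T,\delta_X)\in\mathbb{Z}\times\mathbb{N}$ with $\delta=\delta_T+\eta\delta_X\ge0$. If $\eta=0$, then $\dim C_0(\delta_T,\delta_X)=(\min(\delta_T,q)+1)(\min(\delta_X,q)+1)$. If $\eta\ge2$, set $A=\delta_X$ if $\delta_T\ge0$ and $A=\delta/\eta$ if $\delta_T<0$; $m=\min(\lfloor A\rfloor,q-1)$; $h=\min(\delta_T,q)+1$ if $\delta_T\ge0$ and $q\le\delta_X$, and $h=0$ otherwise; $s=(\delta-q)/\eta$; and $\tilde s=\lfloor s\rfloor$ if $s\in[0,m]$, $\tilde s=-1$ if $s<0$, $\tilde s=m$ if $s>m$. Then \[\dim C_\eta(\delta_T,\delta_X)=(q+1)(\tilde s+1)+(m-\tilde s)\Big(\delta+1-\eta\,\frac{m+\tilde s+1}{2}\Big)+h.\]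
   Context: $R=\mathbb{F}_q[T_1,T_2,X_1,X_2]$; the bidegree of $T_1^{c_1}T_2^{c_2}X_1^{d_1}X_2^{d_2}$ is $(c_1+c_2-\eta d_1,d_1+d_2)$; $R(\delta_T,\delta_X)$ is the span of monomials of that bidegree. The Hirzebruch surface $\mathcal{H}_\eta$ is the quotient of $(\mathbb{A}^2\setminus\{0\})^2$ by $\mathbb{G}_m^2$ acting by $(\lambda,\mu)\cdot(t_1,t_2,x_1,x_2)=(\lambda t_1,\lambda t_2,\mu\lambda^{-\eta}x_1,\mu x_2)$; each of its $(q+1)^2$ $\mathbb{F}_q$-points has a unique representative $(1,a,1,b)$, $(0,1,1,b)$, $(1,a,0,1)$ or $(0,1,0,1)$ ($a,b\in\mathbb{F}_q$), where polynomials are evaluated. $C_\eta(\delta_T,\delta_X)$ is the image of $F\mapsto(F(P))_{P\in\mathcal{H}_\eta(\mathbb{F}_q)}$ on $R(\delta_T,\delta_X)$. *)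

theory Defs
  imports "HOL-Analysis.Analysis" "HOL-Library.Function_Algebras"
begin

text \<open>Points of P^... written as tuples (t1,t2,x1,x2).  Exponent vectors (c1,c2,d1,d2).\<close>

type_synonym 'a pt4 = "'a \<times> 'a \<times> 'a \<times> 'a"

definition hirz_points :: "'a::{finite,field} pt4 set" where
  "hirz_points =
     {(1,a,1,b) | a b. True} \<union> {(0,1,1,b) | b. True} \<union>
     {(1,a,0,1) | a. True} \<union> {(0,1,0,1)}"

definition bideg_exps :: "nat \<Rightarrow> int \<Rightarrow> nat \<Rightarrow> (nat \<times> nat \<times> nat \<times> nat) set" where
  "bideg_exps \<eta> dT dX =
     {(c1,c2,d1,d2). int c1 + int c2 - int \<eta> * int d1 = dT \<and> d1 + d2 = dX}"

definition mon_eval :: "nat \<times> nat \<times> nat \<times> nat \<Rightarrow> 'a::field pt4 \<Rightarrow> 'a" where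
  "mon_eval e P = (case e of (c1,c2,d1,d2) \<Rightarrow> case P of (t1,t2,x1,x2) \<Rightarrow>
      t1 ^ c1 * t2 ^ c2 * x1 ^ d1 * x2 ^ d2)"

definition hirz_code :: "nat \<Rightarrow> int \<Rightarrow> nat \<Rightarrow> ('a::{finite,field} pt4 \<Rightarrow> 'a) set" where
  "hirz_code \<eta> dT dX =
     {(\<lambda>P. if P \<in> hirz_points then (\<Sum>e\<in>bideg_exps \<eta> dT dX. f e * mon_eval e P) else 0)
      | f. True}"

definition code_dim :: "('a::{finite,field} pt4 \<Rightarrow> 'a) set \<Rightarrow> nat" where
  "code_dim C = vector_space.dim (\<lambda>c (v::'a pt4 \<Rightarrow> 'a) x. c * v x) C"

end

theory Submission imports Defs "HOL-Computational_Algebra.Polynomial" begin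

interpretation fv: vector_space "\<lambda>(c::'a::field) (v::'b \<Rightarrow> 'a) x. c * v x"
  by unfold_locales (auto simp: fun_eq_iff algebra_simps)

lemma sum_fun_app: "(\<Sum>i\<in>I. f i) x = (\<Sum>i\<in>I. f i x)"
  by (induction I rule: infinite_finite_induct) auto

lemma card_ff_ge2: "CARD('a::{finite,field}) \<ge> 2"
proof -
  have "card {0::'a, 1} \<le> CARD('a)" by (rule card_mono) auto
  then show ?thesis by simp
qed

lemma ff_pow: fixes a :: "'a::{finite,field}" assumes "a \<noteq> 0"
  shows "a ^ (CARD('a) - 1) = 1"
proof -
  let ?U = "UNIV - {0::'a}"
  have bij: "bij_betw (\<lambda>x. a*x) ?U ?U"
  proof (rule bij_betwI[where g="\<lambda>x. x / a"])
  qed (use assms in auto)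
  have "prod (\<lambda>x. a*x) ?U = prod id ?U"
    using prod.reindex_bij_betw[OF bij, of id] by simp
  moreover have "prod (\<lambda>x. a*x) ?U = a ^ card ?U * prod id ?U"
    by (simp add: prod.distrib)
  moreover have "prod id ?U \<noteq> 0" by (simp add: prod_zero_iff)
  moreover have "card ?U = CARD('a) - 1" by (simp add: card_Diff_subset)
  ultimately show ?thesis by (metis mult_cancel_right1)
qed

lemma pow_shift: fixes a :: "'a::{finite,field}" assumes "k \<ge> 1"
  shows "a ^ (k + t * (CARD('a) - 1)) = a ^ k"
proof (cases "a = 0")
  case True then show ?thesis using assms by (simp add: power_0_left)
next
  case False
  have "a ^ (k + t * (CARD('a) - 1)) = a^k * (a ^ (CARD('a) - 1))^t"
    by (simp only: power_add power_mult mult.commute[of t])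
  then show ?thesis using ff_pow[OF False] by simp
qed

definition red :: "nat \<Rightarrow> nat \<Rightarrow> nat" where "red q k = (k - 1) mod (q - 1) + 1"

lemma red_decomp: "k \<ge> 1 \<Longrightarrow> k = red q k + ((k - 1) div (q - 1)) * (q - 1)"
  unfolding red_def by (metis add.commute add.left_commute le_add_diff_inverse mod_div_mult_eq plus_1_eq_Suc)

lemma pow_red: fixes a :: "'a::{finite,field}" assumes "k \<ge> 1"
  shows "a ^ k = a ^ red CARD('a) k"
proof -
  have "a ^ k = a ^ (red CARD('a) k + ((k - 1) div (CARD('a) - 1)) * (CARD('a) - 1))"
    using red_decomp[OF assms] by metis
  also have "\<dots> = a ^ red CARD('a) k" by (rule pow_shift) (simp add: red_def)
  finally show ?thesis .
qed

lemma red_bounds: "q \<ge> 2 \<Longrightarrow> 1 \<le> red q k \<and> red q k \<le> q - 1"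
  unfolding red_def using pos_mod_bound[of "q-1"]
  by (metis Suc_eq_plus1 Suc_le_eq diff_le_self le_add2 le_trans mod_less_divisor not_less_eq_eq One_nat_def zero_less_diff less_2_cases_iff le_Suc_eq mod_le_divisor)

lemma univ_poly_zero:
  fixes \<alpha> :: "nat \<Rightarrow> 'a::{finite,field}"
  assumes "\<And>x::'a. (\<Sum>k<CARD('a). \<alpha> k * x ^ k) = 0" and "k < CARD('a)"
  shows "\<alpha> k = 0"
proof -
  define p where "p = (\<Sum>k<CARD('a). monom (\<alpha> k) k)"
  have ev: "poly p x = (\<Sum>k<CARD('a). \<alpha> k * x ^ k)" for x
    by (simp add: p_def poly_sum poly_monom)
  have co: "coeff p i = (if i < CARD('a) then \<alpha> i else 0)" for i
    by (simp add: p_def coeff_sum coeff_monom)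
  show ?thesis
  proof (rule ccontr)
    assume "\<alpha> k \<noteq> 0"
    then have "p \<noteq> 0" using co[of k] assms(2) by auto
    have "degree p \<le> CARD('a) - 1"
      by (rule degree_le) (auto simp: co)
    moreover have "card {x. poly p x = 0} \<le> degree p"
      by (rule card_poly_roots_bound[OF \<open>p \<noteq> 0\<close>])
    moreover have "{x. poly p x = 0} = UNIV" using assms(1) ev by auto
    ultimately show False using card_ff_ge2[where 'a='a] by simp
  qed
qed

definition mv :: "nat \<times> nat \<times> nat \<times> nat \<Rightarrow> 'a::{finite,field} pt4 \<Rightarrow> 'a" where
  "mv e = (\<lambda>P. if P \<in> hirz_points then mon_eval e P else 0)"

lemma pts_mem[simp]: "(1,a,1,b) \<in> hirz_points" "(0,1,1,b) \<in> hirz_points"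
   "(1,a,0,1) \<in> hirz_points" "(0,1,0,1) \<in> hirz_points"
  by (auto simp: hirz_points_def)

lemma mv_vals[simp]:
  "mv (c1,c2,d1,d2) (1,a,1,b) = a^c2 * b^d2"
  "mv (c1,c2,d1,d2) (0,1,1,b) = 0^c1 * b^d2"
  "mv (c1,c2,d1,d2) (1,a,0,1) = a^c2 * 0^d1"
  "mv (c1,c2,d1,d2) (0,1,0,1) = 0^c1 * 0^d1"
  by (simp_all add: mv_def mon_eval_def)

lemma mv_off[simp]: "P \<notin> hirz_points \<Longrightarrow> mv e P = 0"
  by (simp add: mv_def)

lemma pts_ext:
  fixes F G :: "'a::{finite,field} pt4 \<Rightarrow> 'a"
  assumes "\<And>P. P \<notin> hirz_points \<Longrightarrow> F P = G P"
    "\<And>a b. F (1,a,1,b) = G (1,a,1,b)" "\<And>b. F (0,1,1,b) = G (0,1,1,b)"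
    "\<And>a. F (1,a,0,1) = G (1,a,0,1)" "F (0,1,0,1) = G (0,1,0,1)"
  shows "F = G"
proof
  fix P show "F P = G P"
  proof (cases "P \<in> hirz_points")
    case True then show ?thesis using assms(2-5) by (auto simp: hirz_points_def)
  qed (use assms(1) in auto)
qed

context fixes \<eta> :: nat and dT :: int and dX :: nat and q :: nat
begin
definition "dl = dT + int \<eta> * int dX"
definition "nn j = nat (dl - int \<eta> * int j)"
definition "jm = (if dT \<ge> 0 then dX else nat \<lfloor>real_of_int dl / real \<eta>\<rfloor>)"
definition "mm = min jm (q - 1)"
definition "HH = (dT \<ge> 0 \<and> q \<le> dX)"
definition "JJ = {0..mm} \<union> (if HH then {dX} else {})"
definition "iota = (\<lambda>(j,c). (nn j - c, c, dX - j, j))"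
end

definition SS :: "nat \<Rightarrow> nat \<Rightarrow> nat set" where "SS q n = {0..min n (q-1)} \<union> {n}"

definition "Bx \<eta> dT dX q = Sigma (JJ \<eta> dT dX q) (\<lambda>j. SS q (nn \<eta> dT dX j))"

lemma le_floor_div_iff: "\<eta> > 0 \<Longrightarrow> (int j \<le> \<lfloor>real_of_int x / real \<eta>\<rfloor>) \<longleftrightarrow> int \<eta> * int j \<le> x"
proof -
  assume "\<eta> > 0"
  have "(int j \<le> \<lfloor>real_of_int x / real \<eta>\<rfloor>) \<longleftrightarrow> real j \<le> real_of_int x / real \<eta>"
    by (simp add: le_floor_iff)
  also have "\<dots> \<longleftrightarrow> real \<eta> * real j \<le> real_of_int x"
    using \<open>\<eta> > 0\<close> by (simp add: pos_le_divide_eq mult.commute)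
  also have "\<dots> \<longleftrightarrow> int \<eta> * int j \<le> x" by (metis of_int_le_iff of_int_mult of_int_of_nat_eq)
  finally show ?thesis .
qed

lemma valid_iff:
  assumes "dl \<eta> dT dX \<ge> 0" "\<eta> = 0 \<longrightarrow> dT \<ge> 0"
  shows "(j \<le> dX \<and> dl \<eta> dT dX - int \<eta> * int j \<ge> 0) \<longleftrightarrow> j \<le> jm \<eta> dT dX"
proof (cases "dT \<ge> 0")
  case True
  have "j \<le> dX \<Longrightarrow> int \<eta> * int j \<le> int \<eta> * int dX" by (simp add: mult_left_mono)
  then show ?thesis using assms True by (auto simp: jm_def dl_def algebra_simps)
next
  case False
  then have "\<eta> > 0" using assms by auto
  have fl: "int j \<le> \<lfloor>real_of_int (dl \<eta> dT dX) / real \<eta>\<rfloor> \<longleftrightarrow> int \<eta> * int j \<le> dl \<eta> dT dX"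
    by (rule le_floor_div_iff[OF \<open>\<eta> > 0\<close>])
  have "int \<eta> * int j \<le> dl \<eta> dT dX \<Longrightarrow> j \<le> dX"
  proof (rule ccontr)
    assume "int \<eta> * int j \<le> dl \<eta> dT dX" "\<not> j \<le> dX"
    then have "int \<eta> * int dX \<le> int \<eta> * int j" by (simp add: mult_left_mono)
    then show False using \<open>int \<eta> * int j \<le> dl \<eta> dT dX\<close> False by (simp add: dl_def)
  qed
  moreover have f0: "0 \<le> \<lfloor>real_of_int (dl \<eta> dT dX) / real \<eta>\<rfloor>" using assms(1) by simp
  ultimately show ?thesis using fl False le_nat_iff[OF f0, of j] by (auto simp: jm_def)
qed

lemma E_iff:
  assumes "dl \<eta> dT dX \<ge> 0" "\<eta> = 0 \<longrightarrow> dT \<ge> 0"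
  shows "(c1,c2,d1,d2) \<in> bideg_exps \<eta> dT dX \<longleftrightarrow>
     d2 \<le> jm \<eta> dT dX \<and> d1 = dX - d2 \<and> c1 + c2 = nn \<eta> dT dX d2"
proof
  assume "(c1,c2,d1,d2) \<in> bideg_exps \<eta> dT dX"
  then have h: "int c1 + int c2 - int \<eta> * int d1 = dT" "d1 + d2 = dX" by (auto simp: bideg_exps_def)
  then have "int d1 = int dX - int d2" by simp
  have "int \<eta> * int dX = int \<eta> * int d1 + int \<eta> * int d2" using h(2) by (metis distrib_left of_nat_add)
  then have e: "int c1 + int c2 = dl \<eta> dT dX - int \<eta> * int d2"
    using h(1) by (simp add: dl_def algebra_simps)
  then have "d2 \<le> jm \<eta> dT dX" using valid_iff[OF assms, of d2] h(2) by simp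
  moreover have "c1 + c2 = nn \<eta> dT dX d2" using e by (simp add: nn_def)
  ultimately show "d2 \<le> jm \<eta> dT dX \<and> d1 = dX - d2 \<and> c1 + c2 = nn \<eta> dT dX d2" using h(2) by simp
next
  assume a: "d2 \<le> jm \<eta> dT dX \<and> d1 = dX - d2 \<and> c1 + c2 = nn \<eta> dT dX d2"
  then have v: "d2 \<le> dX" "dl \<eta> dT dX - int \<eta> * int d2 \<ge> 0" using valid_iff[OF assms, of d2] by auto
  then have "int c1 + int c2 = dl \<eta> dT dX - int \<eta> * int d2" using a unfolding nn_def
    by (metis int_nat_eq of_nat_add)
  moreover have "int d1 = int dX - int d2" using a v by simp
  moreover have "int \<eta> * int dX = int \<eta> * int d1 + int \<eta> * int d2"
    using \<open>int d1 = int dX - int d2\<close> by (simp add: right_diff_distrib)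
  ultimately have "int c1 + int c2 - int \<eta> * int d1 = dT" unfolding dl_def by linarith
  moreover have "d1 + d2 = dX" using a v by simp
  ultimately show "(c1,c2,d1,d2) \<in> bideg_exps \<eta> dT dX" by (simp add: bideg_exps_def)
qed

lemma nn_le: "nn \<eta> dT dX j \<le> nat (dl \<eta> dT dX)"
  by (simp add: nn_def nat_mono)

lemma finite_E:
  assumes "dl \<eta> dT dX \<ge> 0" "\<eta> = 0 \<longrightarrow> dT \<ge> 0"
  shows "finite (bideg_exps \<eta> dT dX)"
proof (rule finite_subset)
  let ?N = "nat (dl \<eta> dT dX)"
  show "bideg_exps \<eta> dT dX \<subseteq> {..?N} \<times> {..?N} \<times> {..dX} \<times> {..dX}"
  proof
    fix e assume "e \<in> bideg_exps \<eta> dT dX"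
    moreover obtain c1 c2 d1 d2 where ee: "e = (c1,c2,d1,d2)" by (cases e)
    ultimately have "(c1,c2,d1,d2) \<in> bideg_exps \<eta> dT dX" by simp
    then have "d2 \<le> jm \<eta> dT dX \<and> d1 = dX - d2 \<and> c1 + c2 = nn \<eta> dT dX d2" using E_iff[OF assms] by blast
    moreover have "jm \<eta> dT dX \<le> dX" using valid_iff[OF assms, of "jm \<eta> dT dX"] by simp
    ultimately show "e \<in> {..?N} \<times> {..?N} \<times> {..dX} \<times> {..dX}" unfolding ee
      using nn_le[of \<eta> dT dX d2] by auto
  qed
qed (intro finite_SigmaI finite_atMost)

lemma code_span:
  assumes "dl \<eta> dT dX \<ge> 0" "\<eta> = 0 \<longrightarrow> dT \<ge> 0"
  shows "(hirz_code \<eta> dT dX :: ('a::{finite,field} pt4 \<Rightarrow> 'a) set) = fv.span (mv ` bideg_exps \<eta> dT dX)"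
proof (rule equalityI)
  let ?E = "bideg_exps \<eta> dT dX"
  have fin: "finite ?E" by (rule finite_E[OF assms])
  show "(hirz_code \<eta> dT dX :: ('a pt4 \<Rightarrow> 'a) set) \<subseteq> fv.span (mv ` ?E)"
  proof
    fix v :: "'a pt4 \<Rightarrow> 'a" assume "v \<in> hirz_code \<eta> dT dX"
    then obtain f where f: "v = (\<lambda>P. if P \<in> hirz_points then (\<Sum>e\<in>?E. f e * mon_eval e P) else 0)"
      by (auto simp: hirz_code_def)
    have "v = (\<Sum>e\<in>?E. (\<lambda>x. f e * mv e x))"
      by (auto simp: f fun_eq_iff sum_fun_app mv_def)
    also have "\<dots> \<in> fv.span (mv ` ?E)"
      by (intro fv.span_sum fv.span_scale fv.span_base) auto
    finally show "v \<in> fv.span (mv ` ?E)" .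
  qed
  show "fv.span (mv ` ?E) \<subseteq> (hirz_code \<eta> dT dX :: ('a pt4 \<Rightarrow> 'a) set)"
  proof (rule fv.span_minimal)
    show "mv ` ?E \<subseteq> (hirz_code \<eta> dT dX :: ('a pt4 \<Rightarrow> 'a) set)"
    proof clarify
      fix e assume "e \<in> ?E"
      have "(\<Sum>e'\<in>?E. (if e' = e then 1 else 0) * mon_eval e' P) = (mon_eval e P :: 'a)" for P
        using \<open>e \<in> ?E\<close> fin by (simp add: if_distrib[of "\<lambda>x. x * _"] sum.delta cong: if_cong)
      then have mveq: "(mv e :: 'a pt4 \<Rightarrow> 'a) = (\<lambda>P. if P \<in> hirz_points then (\<Sum>e'\<in>?E. (if e' = e then 1 else 0) * mon_eval e' P) else 0)"
        by (simp add: mv_def fun_eq_iff)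
      show "(mv e :: 'a pt4 \<Rightarrow> 'a) \<in> hirz_code \<eta> dT dX"
        unfolding hirz_code_def by (rule CollectI, rule exI[of _ "\<lambda>e'. if e' = e then 1 else 0"], rule conjI[OF mveq TrueI])
    qed
    show "fv.subspace (hirz_code \<eta> dT dX :: ('a pt4 \<Rightarrow> 'a) set)"
      unfolding fv.subspace_def hirz_code_def
    proof (intro conjI ballI allI)
      show "0 \<in> {\<lambda>P. if P \<in> hirz_points then \<Sum>e\<in>?E. f e * mon_eval e P else 0 |f. True}"
        by (intro CollectI exI[of _ "\<lambda>_. 0"] conjI TrueI ext) simp
    next
      fix x y assume "x \<in> {\<lambda>P. if P \<in> hirz_points then \<Sum>e\<in>?E. f e * mon_eval e P else (0::'a) |f. True}"
        "y \<in> {\<lambda>P. if P \<in> hirz_points then \<Sum>e\<in>?E. f e * mon_eval e P else (0::'a) |f. True}"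
      then obtain f g where "x = (\<lambda>P. if P \<in> hirz_points then \<Sum>e\<in>?E. f e * mon_eval e P else 0)"
        "y = (\<lambda>P. if P \<in> hirz_points then \<Sum>e\<in>?E. g e * mon_eval e P else 0)" by auto
      then show "x + y \<in> {\<lambda>P. if P \<in> hirz_points then \<Sum>e\<in>?E. f e * mon_eval e P else 0 |f. True}"
      proof (intro CollectI exI[of _ "\<lambda>e. f e + g e"] conjI TrueI ext)
        fix P show "(x + y) P = (if P \<in> hirz_points then \<Sum>e\<in>?E. (f e + g e) * mon_eval e P else 0)"
          unfolding \<open>x = _\<close> \<open>y = _\<close> by (simp add: distrib_right sum.distrib)
      qed
    next
      fix c :: 'a and x assume "x \<in> {\<lambda>P. if P \<in> hirz_points then \<Sum>e\<in>?E. f e * mon_eval e P else (0::'a) |f. True}"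
      then obtain f where "x = (\<lambda>P. if P \<in> hirz_points then \<Sum>e\<in>?E. f e * mon_eval e P else 0)" by auto
      then show "(\<lambda>P. c * x P) \<in> {\<lambda>P. if P \<in> hirz_points then \<Sum>e\<in>?E. f e * mon_eval e P else 0 |f. True}"
      proof (intro CollectI exI[of _ "\<lambda>e. c * f e"] conjI TrueI ext)
        fix P show "c * x P = (if P \<in> hirz_points then \<Sum>e\<in>?E. (c * f e) * mon_eval e P else 0)"
          unfolding \<open>x = _\<close> by (simp add: sum_distrib_left mult.assoc)
      qed
    qed
  qed
qed

abbreviation "BB \<eta> dT dX (ty::'a::{finite,field} itself) \<equiv>
  (\<lambda>x. (mv (iota \<eta> dT dX x) :: 'a pt4 \<Rightarrow> 'a)) ` Bx \<eta> dT dX CARD('a)"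

lemma jm_le: assumes "dl \<eta> dT dX \<ge> 0" "\<eta> = 0 \<longrightarrow> dT \<ge> 0" shows "jm \<eta> dT dX \<le> dX"
  using valid_iff[OF assms, of "jm \<eta> dT dX"] by simp

lemma step1:
  assumes A: "dl \<eta> dT dX \<ge> 0" "\<eta> = 0 \<longrightarrow> dT \<ge> 0"
    and e: "(c1,c2,d1,d2) \<in> bideg_exps \<eta> dT dX" and j: "d2 \<in> JJ \<eta> dT dX CARD('a::{finite,field})"
  shows "(mv (c1,c2,d1,d2) :: 'a pt4 \<Rightarrow> 'a) \<in> BB \<eta> dT dX TYPE('a)"
proof -
  define q where "q = CARD('a)"
  have q2: "q \<ge> 2" using card_ff_ge2[where 'a='a] by (simp add: q_def)
  define n where "n = nn \<eta> dT dX d2"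
  have ee: "d1 = dX - d2" "c1 + c2 = n" using E_iff[OF A] e by (auto simp: n_def)
  show ?thesis
  proof (cases "c2 \<in> SS q n")
    case True
    then have "(d2, c2) \<in> Bx \<eta> dT dX q" using j by (simp add: Bx_def n_def q_def)
    moreover have "iota \<eta> dT dX (d2, c2) = (c1,c2,d1,d2)" using ee by (simp add: iota_def n_def)
    ultimately show ?thesis unfolding q_def by (metis image_eqI)
  next
    case False
    then have c2: "c2 \<ge> q" "c2 < n" using ee by (auto simp: SS_def)
    define r where "r = red q c2"
    have r: "1 \<le> r" "r \<le> q - 1" using red_bounds[OF q2] by (auto simp: r_def)
    then have "r \<in> SS q n" using c2 by (auto simp: SS_def)
    then have "(d2, r) \<in> Bx \<eta> dT dX q" using j by (simp add: Bx_def n_def q_def)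
    moreover have "(mv (c1,c2,d1,d2) :: 'a pt4 \<Rightarrow> 'a) = mv (iota \<eta> dT dX (d2, r))"
    proof -
      have io: "iota \<eta> dT dX (d2, r) = (n - r, r, dX - d2, d2)" by (simp add: iota_def n_def)
      have pw: "(x::'a) ^ c2 = x ^ r" for x using pow_red[of c2 x] c2 q2 by (simp add: r_def q_def)
      have "c1 \<ge> 1" "n - r \<ge> 1" using c2 ee r by auto
      then show ?thesis unfolding io
        by (intro pts_ext) (auto simp: pw ee power_0_left)
    qed
    ultimately show ?thesis unfolding q_def by (metis image_eqI)
  qed
qed

lemma inJJ_span:
  assumes A: "dl \<eta> dT dX \<ge> 0" "\<eta> = 0 \<longrightarrow> dT \<ge> 0"
    and e: "(c1,c2,d1,d2) \<in> bideg_exps \<eta> dT dX" and j: "d2 \<in> JJ \<eta> dT dX CARD('a::{finite,field})"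
  shows "(mv (c1,c2,d1,d2) :: 'a pt4 \<Rightarrow> 'a) \<in> fv.span (BB \<eta> dT dX TYPE('a))"
  by (rule fv.span_base[OF step1[OF A e j]])

lemma step2:
  assumes A: "dl \<eta> dT dX \<ge> 0" "\<eta> = 0 \<longrightarrow> dT \<ge> 0" "\<eta> \<noteq> 1"
    and e: "(c1,c2,d1,d2) \<in> bideg_exps \<eta> dT dX" and j: "d2 \<notin> JJ \<eta> dT dX CARD('a::{finite,field})"
  shows "(mv (c1,c2,d1,d2) :: 'a pt4 \<Rightarrow> 'a) \<in> fv.span (BB \<eta> dT dX TYPE('a))"
proof -
  define q where "q = CARD('a)"
  have q2: "q \<ge> 2" using card_ff_ge2[where 'a='a] by (simp add: q_def)
  define n where "n = nn \<eta> dT dX d2"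
  have ee: "d2 \<le> jm \<eta> dT dX" "d1 = dX - d2" "c1 + c2 = n" using E_iff[OF A(1,2)] e by (auto simp: n_def)
  have jmX: "jm \<eta> dT dX \<le> dX" by (rule jm_le[OF A(1,2)])
  have "d2 > mm \<eta> dT dX q" using j by (auto simp: JJ_def q_def)
  then have d2q: "d2 \<ge> q" using ee(1) by (auto simp: mm_def)
  have "d2 \<noteq> dX"
  proof
    assume "d2 = dX"
    then have "dl \<eta> dT dX - int \<eta> * int dX \<ge> 0" using valid_iff[OF A(1,2), of d2] ee(1) by simp
    then have "dT \<ge> 0" by (simp add: dl_def)
    then have "HH dT dX q" using d2q \<open>d2 = dX\<close> by (simp add: HH_def)
    then show False using j \<open>d2 = dX\<close> by (simp add: JJ_def q_def)
  qed
  then have d1: "d1 \<ge> 1" using ee jmX by simp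
  define jj where "jj = red q d2"
  define t where "t = (d2 - 1) div (q - 1)"
  have jjb: "1 \<le> jj" "jj \<le> q - 1" using red_bounds[OF q2] by (auto simp: jj_def)
  have dec: "d2 = jj + t * (q - 1)" using red_decomp[of d2 q] d2q q2 by (simp add: jj_def t_def)
  have "t \<noteq> 0" using dec jjb d2q by (cases "t = 0") auto
  then have t1: "t \<ge> 1" by simp
  have jjm: "jj \<le> mm \<eta> dT dX q" using jjb d2q ee(1) by (auto simp: mm_def)
  have jjJ: "jj \<in> JJ \<eta> dT dX q" using jjm by (simp add: JJ_def)
  have jjX: "dX - jj \<ge> 1" using jjb d2q \<open>d2 \<noteq> dX\<close> ee jmX by simp
  have vj: "dl \<eta> dT dX - int \<eta> * int jj \<ge> 0" using valid_iff[OF A(1,2), of jj] jjm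
    by (auto simp: mm_def)
  have vd: "dl \<eta> dT dX - int \<eta> * int d2 \<ge> 0" using valid_iff[OF A(1,2), of d2] ee(1) by simp
  define N where "N = nn \<eta> dT dX jj"
  have "int \<eta> * int d2 = int \<eta> * int jj + int (\<eta> * t * (q - 1))"
    using dec by (metis distrib_left mult.assoc of_nat_add of_nat_mult)
  then have "int N = int n + int (\<eta> * t * (q - 1))" using vj vd unfolding N_def n_def nn_def by simp
  then have NN: "N = n + \<eta> * t * (q - 1)" by (metis of_nat_add of_nat_eq_iff)
  have inE: "(c1', c2', dX - jj, jj) \<in> bideg_exps \<eta> dT dX" if "c1' + c2' = N" for c1' c2'
    using E_iff[OF A(1,2)] that jjm by (auto simp: N_def mm_def)
  have inS: "(mv (c1', c2', dX - jj, jj) :: 'a pt4 \<Rightarrow> 'a) \<in> fv.span (BB \<eta> dT dX TYPE('a))"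
    if "c1' + c2' = N" for c1' c2'
    by (rule inJJ_span[OF A(1,2) inE[OF that]]) (use jjJ in \<open>simp add: q_def\<close>)
  have pb: "(b::'a) ^ d2 = b ^ jj" for b using pow_shift[of jj b t] jjb dec by (simp add: q_def)
  have z1: "(0::'a) ^ d1 = 0" "(0::'a) ^ (dX - jj) = 0" using d1 jjX by (auto simp: power_0_left)
  show ?thesis
  proof (cases "c2 \<ge> 1")
    case True
    have "(mv (c1,c2,d1,d2) :: 'a pt4 \<Rightarrow> 'a) = mv (c1, c2 + \<eta> * t * (q - 1), dX - jj, jj)"
    proof (intro pts_ext)
      fix a b :: 'a
      have "a ^ (c2 + \<eta> * t * (q - 1)) = a ^ c2" using pow_shift[of c2 a "\<eta> * t"] True by (simp add: q_def)
      then show "mv (c1, c2, d1, d2) (1, a, 1, b) = mv (c1, c2 + \<eta> * t * (q - 1), dX - jj, jj) (1, a, 1, b)"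
        by (simp add: pb)
    qed (auto simp: pb z1)
    also have "\<dots> \<in> fv.span (BB \<eta> dT dX TYPE('a))" by (rule inS) (use ee NN in simp)
    finally show ?thesis .
  next
    case False
    then have c20: "c2 = 0" by simp
    show ?thesis
    proof (cases "c1 \<ge> 1")
      case True
      have "N \<ge> 1" using NN ee True by simp
      have "(mv (c1,c2,d1,d2) :: 'a pt4 \<Rightarrow> 'a) = mv (N, 0, dX - jj, jj)"
        by (intro pts_ext) (use True \<open>N \<ge> 1\<close> d1 jjX in \<open>auto simp: pb z1 c20 power_0_left\<close>)
      also have "\<dots> \<in> fv.span (BB \<eta> dT dX TYPE('a))" by (rule inS) simp
      finally show ?thesis .
    next
      case False
      then have c10: "c1 = 0" by simp
      show ?thesis
      proof (cases "\<eta> = 0")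
        case True
        then have "N = 0" using NN ee c10 c20 by simp
        have "(mv (c1,c2,d1,d2) :: 'a pt4 \<Rightarrow> 'a) = mv (0, 0, dX - jj, jj)"
          by (intro pts_ext) (auto simp: pb z1 c20 c10)
        also have "\<dots> \<in> fv.span (BB \<eta> dT dX TYPE('a))" by (rule inS) (simp add: \<open>N = 0\<close>)
        finally show ?thesis .
      next
        case False
        then have "\<eta> \<ge> 2" using A(3) by simp
        then have "2 * 1 * (q - 1) \<le> \<eta> * t * (q - 1)"
          by (intro mult_le_mono order.refl) (use t1 in auto)
        then have "N \<ge> 2 * 1 * (q - 1)" using NN by linarith
        then have Nq: "N \<ge> q" using q2 by simp
        define k where "k = red q N"
        have kb: "1 \<le> k" "k \<le> q - 1" using red_bounds[OF q2] by (auto simp: k_def)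
        have pk: "(a::'a) ^ N = a ^ k" for a using pow_red[of N a] Nq q2 by (simp add: k_def q_def)
        have Nk: "N - k \<ge> 1" using kb Nq by simp
        have "(mv (c1,c2,d1,d2) :: 'a pt4 \<Rightarrow> 'a) =
             mv (N, 0, dX - jj, jj) + mv (0, N, dX - jj, jj) - mv (N - k, k, dX - jj, jj)"
        proof (intro pts_ext)
          have z2: "(0::'a) ^ N = 0" "(0::'a) ^ (N - k) = 0" using Nq q2 Nk by (simp_all add: power_0_left)
          fix a b :: 'a
          show "mv (c1, c2, d1, d2) (1, a, 1, b) =
            (mv (N, 0, dX - jj, jj) + mv (0, N, dX - jj, jj) - mv (N - k, k, dX - jj, jj)) (1, a, 1, b)"
            by (simp add: pb pk c20)
          show "mv (c1, c2, d1, d2) (0, 1, 1, b) =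
            (mv (N, 0, dX - jj, jj) + mv (0, N, dX - jj, jj) - mv (N - k, k, dX - jj, jj)) (0, 1, 1, b)"
            by (simp add: pb z2 c10)
          show "mv (c1, c2, d1, d2) (1, a, 0, 1) =
            (mv (N, 0, dX - jj, jj) + mv (0, N, dX - jj, jj) - mv (N - k, k, dX - jj, jj)) (1, a, 0, 1)"
            by (simp add: z1)
          show "mv (c1, c2, d1, d2) (0, 1, 0, 1) =
            (mv (N, 0, dX - jj, jj) + mv (0, N, dX - jj, jj) - mv (N - k, k, dX - jj, jj)) (0, 1, 0, 1)"
            using d1 jjX by (simp add: power_0_left)
        qed simp
        also have "\<dots> \<in> fv.span (BB \<eta> dT dX TYPE('a))"
        proof (intro fv.span_add fv.span_diff)
          show "mv (N, 0, dX - jj, jj) \<in> fv.span (BB \<eta> dT dX TYPE('a))" by (rule inS) simp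
          show "mv (0, N, dX - jj, jj) \<in> fv.span (BB \<eta> dT dX TYPE('a))" by (rule inS) simp
          show "mv (N - k, k, dX - jj, jj) \<in> fv.span (BB \<eta> dT dX TYPE('a))" by (rule inS) (use Nk in simp)
        qed
        finally show ?thesis .
      qed
    qed
  qed
qed

lemma spanning:
  assumes A: "dl \<eta> dT dX \<ge> 0" "\<eta> = 0 \<longrightarrow> dT \<ge> 0" "\<eta> \<noteq> 1"
  shows "(mv ` bideg_exps \<eta> dT dX :: ('a::{finite,field} pt4 \<Rightarrow> 'a) set) \<subseteq> fv.span (BB \<eta> dT dX TYPE('a))"
proof clarify
  fix c1 c2 d1 d2 assume e: "(c1,c2,d1,d2) \<in> bideg_exps \<eta> dT dX"
  show "(mv (c1,c2,d1,d2) :: 'a pt4 \<Rightarrow> 'a) \<in> fv.span (BB \<eta> dT dX TYPE('a))"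
  proof (cases "d2 \<in> JJ \<eta> dT dX CARD('a)")
    case True then show ?thesis by (rule inJJ_span[OF A(1,2) e])
  next
    case False then show ?thesis by (rule step2[OF A e])
  qed
qed

lemma sum_lt_restrict:
  assumes "T \<subseteq> {..<q::nat}"
  shows "(\<Sum>k<q. (if k \<in> T then f k else 0)) = (\<Sum>k\<in>T. f k)"
proof -
  have "(\<Sum>k<q. (if k \<in> T then f k else 0)) = (\<Sum>k\<in>{..<q} \<inter> T. f k)"
    by (rule sum.inter_restrict[symmetric]) simp
  also have "{..<q} \<inter> T = T" using assms by blast
  finally show ?thesis .
qed

lemma univ_poly_zero':
  fixes \<beta> :: "nat \<Rightarrow> 'a::{finite,field}"
  assumes "T \<subseteq> {..<CARD('a)}" "\<And>x::'a. (\<Sum>k\<in>T. \<beta> k * x ^ k) = 0" "k \<in> T"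
  shows "\<beta> k = 0"
proof -
  have "(if k \<in> T then \<beta> k else 0) = 0"
  proof (rule univ_poly_zero[where \<alpha>="\<lambda>k. if k \<in> T then \<beta> k else 0"])
    fix x :: 'a
    have "(\<Sum>k<CARD('a). (if k \<in> T then \<beta> k else 0) * x ^ k) = (\<Sum>k<CARD('a). (if k \<in> T then \<beta> k * x ^ k else 0))"
      by (rule sum.cong) auto
    also have "\<dots> = 0" by (simp add: sum_lt_restrict[OF assms(1)] assms(2))
    finally show "(\<Sum>k<CARD('a). (if k \<in> T then \<beta> k else 0) * x ^ k) = 0" .
  qed (use assms in auto)
  then show ?thesis using assms(3) by simp
qed

lemma SS_facts: "finite (SS q n)" "n \<in> SS q n" "c \<in> SS q n \<Longrightarrow> c \<le> n"
  "c \<in> SS q n - {n} \<Longrightarrow> q \<ge> 1 \<Longrightarrow> c < q"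
  by (auto simp: SS_def)

lemma tpart_zero:
  fixes \<mu> :: "nat \<Rightarrow> 'a::{finite,field}"
  assumes h1: "\<And>a. (\<Sum>c\<in>SS CARD('a) n. \<mu> c * a ^ c) = 0"
    and h2: "(\<Sum>c\<in>SS CARD('a) n. \<mu> c * 0 ^ (n - c)) = 0"
    and c: "c \<in> SS CARD('a) n"
  shows "\<mu> c = 0"
proof -
  let ?S = "SS CARD('a) n"
  have q2: "CARD('a) \<ge> 2" by (rule card_ff_ge2)
  have "(\<Sum>c\<in>?S. \<mu> c * 0 ^ (n - c)) = \<mu> n * 0 ^ (n - n) + (\<Sum>c\<in>?S - {n}. \<mu> c * 0 ^ (n - c))"
    using SS_facts(1,2) by (rule sum.remove)
  also have "(\<Sum>c\<in>?S - {n}. \<mu> c * (0::'a) ^ (n - c)) = 0"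
  proof (rule sum.neutral, rule ballI)
    fix x assume "x \<in> ?S - {n}"
    then have "x < n" using SS_facts(3)[of x] by fastforce
    then show "\<mu> x * (0::'a) ^ (n - x) = 0" by simp
  qed
  finally have mn: "\<mu> n = 0" using h2 by simp
  show ?thesis
  proof (cases "c = n")
    case True then show ?thesis using mn by simp
  next
    case False
    show ?thesis
    proof (rule univ_poly_zero'[where T="?S - {n}"])
      show "?S - {n} \<subseteq> {..<CARD('a)}" using SS_facts(4) q2 by force
      fix x :: 'a
      have "(\<Sum>c\<in>?S. \<mu> c * x ^ c) = \<mu> n * x ^ n + (\<Sum>c\<in>?S - {n}. \<mu> c * x ^ c)"
        using SS_facts(1,2) by (rule sum.remove)
      then show "(\<Sum>k\<in>?S - {n}. \<mu> k * x ^ k) = 0" using h1[of x] mn by simp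
    qed (use c False in auto)
  qed
qed

lemma JJ_fin: "finite (JJ \<eta> dT dX q)" by (simp add: JJ_def)

lemma indep_idx:
  assumes A: "dl \<eta> dT dX \<ge> 0" "\<eta> = 0 \<longrightarrow> dT \<ge> 0"
    and z: "(\<Sum>x\<in>Bx \<eta> dT dX CARD('a). (\<lambda>P. lam x * (mv (iota \<eta> dT dX x) :: 'a::{finite,field} pt4 \<Rightarrow> 'a) P)) = 0"
    and x: "x \<in> Bx \<eta> dT dX CARD('a)"
  shows "lam x = 0"
proof -
  define q where "q = CARD('a)"
  have q2: "q \<ge> 2" using card_ff_ge2[where 'a='a] by (simp add: q_def)
  define J0 where "J0 = {0..mm \<eta> dT dX q}"
  have J0q: "J0 \<subseteq> {..<CARD('a)}" using q2 by (auto simp: J0_def mm_def q_def)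
  have mmX: "mm \<eta> dT dX q \<le> dX" using jm_le[OF A] by (simp add: mm_def)
  have ev: "(\<Sum>x\<in>Bx \<eta> dT dX q. lam x * (mv (iota \<eta> dT dX x) :: 'a pt4 \<Rightarrow> 'a) P) = 0" for P
    using fun_cong[OF z, of P] by (simp add: sum_fun_app q_def)
  have sig: "(\<Sum>x\<in>Bx \<eta> dT dX q. lam x * (mv (iota \<eta> dT dX x) :: 'a pt4 \<Rightarrow> 'a) P) =
     (\<Sum>j\<in>JJ \<eta> dT dX q. \<Sum>c\<in>SS q (nn \<eta> dT dX j). lam (j,c) * mv (nn \<eta> dT dX j - c, c, dX - j, j) P)" for P
    unfolding Bx_def by (subst sum.Sigma) (auto simp: JJ_fin SS_facts iota_def intro!: sum.cong split: prod.splits)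
  define \<Phi> where "\<Phi> j a = (\<Sum>c\<in>SS q (nn \<eta> dT dX j). lam (j,c) * a ^ c)" for j and a :: 'a
  define \<Psi> where "\<Psi> j = (\<Sum>c\<in>SS q (nn \<eta> dT dX j). lam (j,c) * (0::'a) ^ (nn \<eta> dT dX j - c))" for j
  have E1: "(\<Sum>j\<in>JJ \<eta> dT dX q. \<Phi> j a * b ^ j) = 0" for a b
    using ev[of "(1,a,1,b)"] unfolding sig by (simp add: \<Phi>_def sum_distrib_right mult.assoc)
  have E2: "(\<Sum>j\<in>JJ \<eta> dT dX q. \<Psi> j * b ^ j) = 0" for b
    using ev[of "(0,1,1,b)"] unfolding sig by (simp add: \<Psi>_def sum_distrib_right mult.assoc)
  have E3: "(\<Sum>j\<in>JJ \<eta> dT dX q. \<Phi> j a * 0 ^ (dX - j)) = 0" for a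
    using ev[of "(1,a,0,1)"] unfolding sig by (simp add: \<Phi>_def sum_distrib_right mult.assoc)
  have E4: "(\<Sum>j\<in>JJ \<eta> dT dX q. \<Psi> j * 0 ^ (dX - j)) = 0"
    using ev[of "(0,1,0,1)"] unfolding sig by (simp add: \<Psi>_def sum_distrib_right mult.assoc)
  have R: "(\<forall>a b. (\<Sum>j\<in>J0. \<Phi> j a * b ^ j) = 0) \<and> (\<forall>b. (\<Sum>j\<in>J0. \<Psi> j * b ^ j) = 0) \<and>
      (HH dT dX q \<longrightarrow> (\<forall>a. \<Phi> dX a = 0) \<and> \<Psi> dX = 0)"
  proof (cases "HH dT dX q")
    case True
    have nJ: "dX \<notin> J0" using True q2 by (auto simp: J0_def HH_def mm_def)
    have JJi: "JJ \<eta> dT dX q = insert dX J0" using True by (auto simp: JJ_def J0_def)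
    have lt: "j \<in> J0 \<Longrightarrow> dX - j > 0" for j using nJ mmX by (auto simp: J0_def)
    have z0: "(\<Sum>j\<in>J0. f j * (0::'a) ^ (dX - j)) = 0" for f
      by (rule sum.neutral) (use lt in auto)
    have finJ0: "finite J0" by (simp add: J0_def)
    have P1: "\<Phi> dX a = 0" for a using E3[of a] unfolding JJi by (simp add: sum.insert[OF finJ0 nJ] z0)
    have P2: "\<Psi> dX = 0" using E4 unfolding JJi by (simp add: sum.insert[OF finJ0 nJ] z0)
    show ?thesis using E1 E2 P1 P2 True unfolding JJi by (simp add: sum.insert[OF finJ0 nJ])
  next
    case False
    then have "JJ \<eta> dT dX q = J0" by (simp add: JJ_def J0_def)
    then show ?thesis using E1 E2 False by simp
  qed
  have allz: "(\<forall>a. \<Phi> j a = 0) \<and> \<Psi> j = 0" if j: "j \<in> JJ \<eta> dT dX q" for j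
  proof (cases "j \<in> J0")
    case True
    have "\<Phi> j a = 0" for a
      by (rule univ_poly_zero'[OF J0q _ True, where \<beta>="\<lambda>j. \<Phi> j a"]) (use R in auto)
    moreover have "\<Psi> j = 0"
      by (rule univ_poly_zero'[OF J0q _ True, where \<beta>="\<Psi>"]) (use R in auto)
    ultimately show ?thesis by simp
  next
    case False
    then have "HH dT dX q" "j = dX" using j by (auto simp: JJ_def J0_def split: if_splits)
    then show ?thesis using R by simp
  qed
  obtain j c where xjc: "x = (j,c)" "j \<in> JJ \<eta> dT dX q" "c \<in> SS q (nn \<eta> dT dX j)"
    using x by (auto simp: Bx_def q_def)
  have "lam (j,c) = 0"
  proof (rule tpart_zero[where \<mu>="\<lambda>c. lam (j,c)" and n="nn \<eta> dT dX j"])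
    show "(\<Sum>c\<in>SS CARD('a) (nn \<eta> dT dX j). lam (j, c) * a ^ c) = 0" for a
      using allz[OF xjc(2)] by (simp add: \<Phi>_def q_def)
    show "(\<Sum>c\<in>SS CARD('a) (nn \<eta> dT dX j). lam (j, c) * 0 ^ (nn \<eta> dT dX j - c)) = 0"
      using allz[OF xjc(2)] by (simp add: \<Psi>_def q_def)
  qed (use xjc in \<open>simp add: q_def\<close>)
  then show ?thesis using xjc by simp
qed

lemma iota_in_E:
  assumes A: "dl \<eta> dT dX \<ge> 0" "\<eta> = 0 \<longrightarrow> dT \<ge> 0" and x: "x \<in> Bx \<eta> dT dX q"
  shows "iota \<eta> dT dX x \<in> bideg_exps \<eta> dT dX"
proof -
  obtain j c where xjc: "x = (j,c)" "j \<in> JJ \<eta> dT dX q" "c \<in> SS q (nn \<eta> dT dX j)"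
    using x by (auto simp: Bx_def)
  have "j \<le> jm \<eta> dT dX"
  proof (cases "j \<in> {0..mm \<eta> dT dX q}")
    case True then show ?thesis by (auto simp: mm_def)
  next
    case False
    then have "HH dT dX q" "j = dX" using xjc(2) by (auto simp: JJ_def split: if_splits)
    then show ?thesis by (simp add: HH_def jm_def)
  qed
  moreover have "c \<le> nn \<eta> dT dX j" using SS_facts(3) xjc(3) by blast
  ultimately show ?thesis using E_iff[OF A] xjc(1) by (simp add: iota_def)
qed

lemma dim_main:
  assumes A: "dl \<eta> dT dX \<ge> 0" "\<eta> = 0 \<longrightarrow> dT \<ge> 0" "\<eta> \<noteq> 1"
  shows "code_dim (hirz_code \<eta> dT dX :: ('a::{finite,field} pt4 \<Rightarrow> 'a) set) = card (Bx \<eta> dT dX CARD('a))"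
proof -
  define g where "g = (\<lambda>x. (mv (iota \<eta> dT dX x) :: 'a pt4 \<Rightarrow> 'a))"
  let ?X = "Bx \<eta> dT dX CARD('a)"
  let ?B = "g ` ?X"
  have finX: "finite ?X" by (auto simp: Bx_def JJ_fin SS_facts)
  have ind: "lam x = 0" if "(\<Sum>x\<in>?X. (\<lambda>P. lam x * g x P)) = 0" "x \<in> ?X" for lam x
    using indep_idx[OF A(1,2), of lam x] that by (simp add: g_def)
  have inj: "inj_on g ?X"
  proof (rule inj_onI, rule ccontr)
    fix x y assume xy: "x \<in> ?X" "y \<in> ?X" "g x = g y" "x \<noteq> y"
    define lam :: "nat \<times> nat \<Rightarrow> 'a" where "lam z = (if z = x then 1 else if z = y then -1 else 0)" for z
    have "(\<Sum>z\<in>?X. (\<lambda>P. lam z * g z P)) = (\<Sum>z\<in>?X. (if z = x then g z else 0) - (if z = y then g z else 0))"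
      by (rule sum.cong) (use xy in \<open>auto simp: lam_def fun_eq_iff\<close>)
    also have "\<dots> = 0" using xy finX by (simp add: sum_subtractf sum.delta)
    finally have "lam x = 0" using ind xy(1) by blast
    then show False by (simp add: lam_def)
  qed
  have finB: "finite ?B" using finX by simp
  have indep: "fv.independent ?B"
    unfolding fv.dependent_finite[OF finB]
  proof
    assume "\<exists>u. (\<exists>v\<in>?B. u v \<noteq> 0) \<and> (\<Sum>v\<in>?B. (\<lambda>x. u v * v x)) = 0"
    then obtain c v where h: "(\<Sum>v\<in>?B. (\<lambda>x. c v * v x)) = 0" "v \<in> ?B" "c v \<noteq> 0" by blast
    then obtain x where x: "x \<in> ?X" "v = g x" by blast
    have "(\<Sum>x\<in>?X. (\<lambda>P. c (g x) * g x P)) = 0" using h(1) by (simp add: sum.reindex[OF inj])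
    then show False using ind[of "\<lambda>x. c (g x)" x] x h(3) by simp
  qed
  let ?E = "bideg_exps \<eta> dT dX"
  let ?M = "(mv ` ?E :: ('a pt4 \<Rightarrow> 'a) set)"
  have BE: "?B \<subseteq> ?M" using iota_in_E[OF A(1,2)] by (auto simp: g_def)
  have sp: "?M \<subseteq> fv.span ?B" using spanning[OF A, where 'a='a] by (simp add: g_def)
  have "card ?B = fv.dim (fv.span (?M))"
  proof (rule fv.basis_card_eq_dim)
    show "?B \<subseteq> fv.span (?M)" using BE fv.span_superset by blast
    show "fv.span (?M) \<subseteq> fv.span ?B" by (rule fv.span_minimal[OF sp fv.subspace_span])
  qed (rule indep)
  moreover have "card ?B = card ?X" by (rule card_image[OF inj])
  ultimately show ?thesis unfolding code_dim_def code_span[OF A(1,2)] by simp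
qed

lemma gauss_range: "k \<le> M + 1 \<Longrightarrow> 2 * (\<Sum>j\<in>{k..M}. int j) = int (M + 1 - k) * int (M + k)"
proof (induction M arbitrary: k)
  case 0 then show ?case by (cases k) auto
next
  case (Suc M)
  show ?case
  proof (cases "k = Suc M + 1")
    case True then show ?thesis by simp
  next
    case False
    then have k: "k \<le> Suc M" using Suc.prems by simp
    have "{k..Suc M} = insert (Suc M) {k..M}" using k by (rule atLeastAtMostSuc_conv)
    then have "2 * (\<Sum>j\<in>{k..Suc M}. int j) = 2 * int (Suc M) + 2 * (\<Sum>j\<in>{k..M}. int j)"
      by (simp add: algebra_simps)
    also have "\<dots> = 2 * int (Suc M) + int (M + 1 - k) * int (M + k)" using Suc.IH[of k] k by simp
    also have "\<dots> = int (Suc M + 1 - k) * int (Suc M + k)" using k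
      by (simp add: of_nat_diff algebra_simps)
    finally show ?thesis .
  qed
qed

lemma split_sum:
  fixes st Q D E :: int and M :: nat
  assumes "-1 \<le> st" "st \<le> int M"
  shows "2 * (\<Sum>j\<in>{0..M}. (if int j \<le> st then Q else D - E * int j))
         = 2 * (st + 1) * Q + (int M - st) * (2 * D - E * (int M + st + 1))"
proof -
  define k where "k = nat (st + 1)"
  have kk: "int k = st + 1" "k \<le> M + 1" using assms by (auto simp: k_def)
  have un: "{0..M} = {0..<k} \<union> {k..M}" using kk by auto
  have "(\<Sum>j\<in>{0..M}. (if int j \<le> st then Q else D - E * int j))
      = (\<Sum>j\<in>{0..<k}. (if int j \<le> st then Q else D - E * int j)) + (\<Sum>j\<in>{k..M}. (if int j \<le> st then Q else D - E * int j))"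
    unfolding un by (rule sum.union_disjoint) auto
  also have "(\<Sum>j\<in>{0..<k}. (if int j \<le> st then Q else D - E * int j)) = int k * Q"
    using kk by (simp add: sum.cong[of _ _ _ "\<lambda>_. Q"])
  also have "(\<Sum>j\<in>{k..M}. (if int j \<le> st then Q else D - E * int j)) = (\<Sum>j\<in>{k..M}. D - E * int j)"
    by (rule sum.cong) (use kk in auto)
  also have "\<dots> = int (M + 1 - k) * D - E * (\<Sum>j\<in>{k..M}. int j)"
    by (simp add: sum_subtractf sum_distrib_left)
  finally have "2 * (\<Sum>j\<in>{0..M}. (if int j \<le> st then Q else D - E * int j)) =
     2 * int k * Q + 2 * int (M + 1 - k) * D - E * (2 * (\<Sum>j\<in>{k..M}. int j))"
    by (simp add: algebra_simps)
  also have "\<dots> = 2 * int k * Q + 2 * int (M + 1 - k) * D - E * (int (M + 1 - k) * int (M + k))"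
    using gauss_range[OF kk(2)] by simp
  also have "int (M + 1 - k) = int M - st" using kk by (simp add: of_nat_diff)
  also have "int (M + k) = int M + st + 1" using kk by simp
  finally show ?thesis using kk by (simp add: algebra_simps)
qed

lemma final_sum:
  fixes \<delta> q :: int and \<eta> M :: nat
  assumes eta: "\<eta> > 0"
  defines "s \<equiv> real_of_int (\<delta> - q) / real \<eta>"
  defines "st \<equiv> (if 0 \<le> s \<and> s \<le> real_of_int (int M) then \<lfloor>s\<rfloor> else if s < 0 then -1 else int M)"
  shows "real_of_int (\<Sum>j\<in>{0..M}. min (\<delta> - int \<eta> * int j) q + 1)
     = real_of_int ((q + 1) * (st + 1)) + real_of_int (int M - st) * (real_of_int \<delta> + 1 - real \<eta> * real_of_int (int M + st + 1) / 2)"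
proof -
  have key: "(int j \<le> st \<longleftrightarrow> q \<le> \<delta> - int \<eta> * int j)" if "j \<le> M" for j
  proof -
    have fl: "(int j \<le> \<lfloor>s\<rfloor>) \<longleftrightarrow> int \<eta> * int j \<le> \<delta> - q"
      unfolding s_def by (rule le_floor_div_iff[OF eta])
    show ?thesis
    proof (cases "0 \<le> s \<and> s \<le> real_of_int (int M)")
      case True then show ?thesis using fl by (simp add: st_def) linarith
    next
      case False
      show ?thesis
      proof (cases "s < 0")
        case True
        then have "\<lfloor>s\<rfloor> < 0" by linarith
        then have "\<not> int \<eta> * int j \<le> \<delta> - q" using fl by linarith
        then show ?thesis using True by (simp add: st_def)
      next
        case F2: False
        then have "s > real M" using False by simp
        then have "int M \<le> \<lfloor>s\<rfloor>" by (simp add: le_floor_iff)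
        then have "int \<eta> * int j \<le> \<delta> - q" using fl that by simp
        then show ?thesis using that False F2 by (simp add: st_def)
      qed
    qed
  qed
  have stb: "-1 \<le> st" "st \<le> int M"
    unfolding st_def by (auto simp: floor_le_iff le_floor_iff)
  define S where "S = (\<Sum>j\<in>{0..M}. min (\<delta> - int \<eta> * int j) q + 1)"
  have "S = (\<Sum>j\<in>{0..M}. (if int j \<le> st then q + 1 else (\<delta> + 1) - int \<eta> * int j))"
    unfolding S_def by (rule sum.cong) (use key in auto)
  then have h: "2 * S = 2 * (st + 1) * (q + 1) + (int M - st) * (2 * (\<delta> + 1) - int \<eta> * (int M + st + 1))"
    using split_sum[OF stb, of "q + 1" "\<delta> + 1" "int \<eta>"] by simp
  have "2 * (real_of_int ((q + 1) * (st + 1)) + real_of_int (int M - st) * (real_of_int \<delta> + 1 - real \<eta> * real_of_int (int M + st + 1) / 2))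
     = real_of_int (2 * (st + 1) * (q + 1) + (int M - st) * (2 * (\<delta> + 1) - int \<eta> * (int M + st + 1)))"
    by (simp add: field_simps)
  also have "\<dots> = 2 * real_of_int S" unfolding h[symmetric] by simp
  finally show ?thesis unfolding S_def[symmetric] by simp
qed


lemma card_SS: "q \<ge> 1 \<Longrightarrow> card (SS q n) = min n q + 1"
proof -
  assume q: "q \<ge> 1"
  show ?thesis
  proof (cases "n \<le> q - 1")
    case True
    then have "SS q n = {0..n}" by (auto simp: SS_def)
    then show ?thesis using True q by simp
  next
    case False
    then have "SS q n = insert n {0..q-1}" by (auto simp: SS_def)
    then show ?thesis using False q by simp
  qed
qed

lemma card_Bx: "q \<ge> 1 \<Longrightarrow> card (Bx \<eta> dT dX q) = (\<Sum>j\<in>JJ \<eta> dT dX q. min (nn \<eta> dT dX j) q + 1)"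
  unfolding Bx_def by (subst card_SigmaI) (auto simp: JJ_fin SS_facts card_SS)

lemma sum_JJ: "q \<ge> 1 \<Longrightarrow> (\<Sum>j\<in>JJ \<eta> dT dX q. f j) = (\<Sum>j\<in>{0..mm \<eta> dT dX q}. f j) + (if HH dT dX q then f dX else 0)"
proof -
  assume q: "q \<ge> 1"
  show ?thesis
  proof (cases "HH dT dX q")
    case True
    then have "dX \<notin> {0..mm \<eta> dT dX q}" using q by (auto simp: HH_def mm_def)
    then show ?thesis using True by (simp add: JJ_def add.commute)
  next
    case False then show ?thesis by (simp add: JJ_def)
  qed
qed

theorem proposition2p23:
  fixes \<eta> :: nat and dT :: int and dX :: nat
  assumes "dT + int \<eta> * int dX \<ge> 0"
  shows "(\<eta> = 0 \<longrightarrow>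
            int (code_dim (hirz_code \<eta> dT dX :: ('a::{finite,field} pt4 \<Rightarrow> 'a) set))
              = (min dT (int CARD('a)) + 1) * (min (int dX) (int CARD('a)) + 1))
       \<and> (\<eta> \<ge> 2 \<longrightarrow>
          (let q = int CARD('a);
               \<delta> = dT + int \<eta> * int dX;
               A = (if dT \<ge> 0 then real dX else real_of_int \<delta> / real \<eta>);
               m = min \<lfloor>A\<rfloor> (q - 1);
               h = (if dT \<ge> 0 \<and> q \<le> int dX then min dT q + 1 else 0);
               s = real_of_int (\<delta> - q) / real \<eta>;
               st = (if 0 \<le> s \<and> s \<le> real_of_int m then \<lfloor>s\<rfloor>
                     else if s < 0 then -1 else m)
           in real (code_dim (hirz_code \<eta> dT dX :: ('a pt4 \<Rightarrow> 'a) set))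
              = real_of_int ((q + 1) * (st + 1))
                + real_of_int (m - st) * (real_of_int \<delta> + 1 - real \<eta> * real_of_int (m + st + 1) / 2)
                + real_of_int h))"
proof -
  define q where "q = CARD('a)"
  have q2: "q \<ge> 2" using card_ff_ge2[where 'a='a] by (simp add: q_def)
  have A1: "dl \<eta> dT dX \<ge> 0" using assms by (simp add: dl_def)
  have cd: "code_dim (hirz_code \<eta> dT dX :: ('a pt4 \<Rightarrow> 'a) set) =
      (\<Sum>j\<in>{0..mm \<eta> dT dX q}. min (nn \<eta> dT dX j) q + 1) + (if HH dT dX q then min (nn \<eta> dT dX dX) q + 1 else 0)"
    if "\<eta> \<noteq> 1" "\<eta> = 0 \<longrightarrow> dT \<ge> 0"
  proof -
    have "code_dim (hirz_code \<eta> dT dX :: ('a pt4 \<Rightarrow> 'a) set) = card (Bx \<eta> dT dX q)"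
      using dim_main[OF A1 that(2) that(1), where 'a='a] by (simp add: q_def)
    also have "\<dots> = (\<Sum>j\<in>JJ \<eta> dT dX q. min (nn \<eta> dT dX j) q + 1)" by (rule card_Bx) (use q2 in simp)
    also have "\<dots> = (\<Sum>j\<in>{0..mm \<eta> dT dX q}. min (nn \<eta> dT dX j) q + 1) + (if HH dT dX q then min (nn \<eta> dT dX dX) q + 1 else 0)"
      by (rule sum_JJ) (use q2 in simp)
    finally show ?thesis .
  qed
  show ?thesis
  proof (intro conjI impI)
    assume e0: "\<eta> = 0"
    then have dT0: "dT \<ge> 0" using A1 by (simp add: dl_def)
    have nnj: "nn \<eta> dT dX j = nat dT" for j using e0 by (simp add: nn_def dl_def)
    have "code_dim (hirz_code \<eta> dT dX :: ('a pt4 \<Rightarrow> 'a) set) =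
       (mm \<eta> dT dX q + 1 + (if HH dT dX q then 1 else 0)) * (min (nat dT) q + 1)"
    proof -
      have c0: "code_dim (hirz_code \<eta> dT dX :: ('a pt4 \<Rightarrow> 'a) set) =
        (\<Sum>j\<in>{0..mm \<eta> dT dX q}. min (nat dT) q + 1) + (if HH dT dX q then min (nat dT) q + 1 else 0)"
        using cd[OF _ impI[OF dT0]] e0 unfolding nnj by simp
      show ?thesis unfolding c0 by (simp add: algebra_simps)
    qed
    also have "mm \<eta> dT dX q + 1 + (if HH dT dX q then 1 else 0) = min dX q + 1"
      using dT0 q2 by (auto simp: mm_def jm_def HH_def)
    finally have "int (code_dim (hirz_code \<eta> dT dX :: ('a pt4 \<Rightarrow> 'a) set)) = int ((min dX q + 1) * (min (nat dT) q + 1))"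
      by (simp only:)
    also have "\<dots> = int (min dX q + 1) * int (min (nat dT) q + 1)" by (rule of_nat_mult)
    also have "\<dots> = (min dT (int q) + 1) * (min (int dX) (int q) + 1)"
    proof -
      have "int (min dX q + 1) = min (int dX) (int q) + 1" by simp
      moreover have "int (min (nat dT) q + 1) = min dT (int q) + 1" using dT0 by (simp add: min_def) linarith
      ultimately show ?thesis by (simp add: mult.commute add.commute)
    qed
    finally show "int (code_dim (hirz_code \<eta> dT dX :: ('a pt4 \<Rightarrow> 'a) set))
              = (min dT (int CARD('a)) + 1) * (min (int dX) (int CARD('a)) + 1)" by (simp add: q_def)
  next
    assume e2: "\<eta> \<ge> 2"
    let ?A = "(if dT \<ge> 0 then real dX else real_of_int (dl \<eta> dT dX) / real \<eta>)"
    have fA: "\<lfloor>?A\<rfloor> = int (jm \<eta> dT dX)"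
    proof (cases "dT \<ge> 0")
      case True then show ?thesis by (simp add: jm_def)
    next
      case False
      have "0 \<le> \<lfloor>real_of_int (dl \<eta> dT dX) / real \<eta>\<rfloor>" using A1 by simp
      then show ?thesis using False by (simp add: jm_def)
    qed
    have mI: "min \<lfloor>?A\<rfloor> (int q - 1) = int (mm \<eta> dT dX q)"
      using fA q2 by (simp add: mm_def min_def of_nat_diff) linarith
    have hI: "(if dT \<ge> 0 \<and> int q \<le> int dX then min dT (int q) + 1 else 0) =
       int (if HH dT dX q then min (nn \<eta> dT dX dX) q + 1 else 0)"
    proof (cases "HH dT dX q")
      case True
      then have "nn \<eta> dT dX dX = nat dT" by (simp add: nn_def dl_def HH_def)
      then show ?thesis using True by (auto simp: HH_def min_def)
    qed (auto simp: HH_def)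
    have sI: "int (\<Sum>j\<in>{0..mm \<eta> dT dX q}. min (nn \<eta> dT dX j) q + 1) =
        (\<Sum>j\<in>{0..mm \<eta> dT dX q}. min (dl \<eta> dT dX - int \<eta> * int j) (int q) + 1)"
    proof -
      have "int (min (nn \<eta> dT dX j) q + 1) = min (dl \<eta> dT dX - int \<eta> * int j) (int q) + 1"
        if "j \<in> {0..mm \<eta> dT dX q}" for j
      proof -
        have "j \<le> jm \<eta> dT dX" using that by (simp add: mm_def)
        then have "dl \<eta> dT dX - int \<eta> * int j \<ge> 0" using valid_iff[OF A1, of j] e2 by simp
        then show ?thesis by (simp add: nn_def min_def) linarith
      qed
      then show ?thesis by (simp add: of_nat_sum add.commute)
    qed
    have e0: "\<eta> > 0" using e2 by simp
    have main: "real (code_dim (hirz_code \<eta> dT dX :: ('a pt4 \<Rightarrow> 'a) set)) =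
       real_of_int (\<Sum>j\<in>{0..mm \<eta> dT dX q}. min (dl \<eta> dT dX - int \<eta> * int j) (int q) + 1)
       + real_of_int (int (if HH dT dX q then min (nn \<eta> dT dX dX) q + 1 else 0))"
    proof -
      define S where "S = (\<Sum>j\<in>{0..mm \<eta> dT dX q}. min (nn \<eta> dT dX j) q + 1)"
      define H where "H = (if HH dT dX q then min (nn \<eta> dT dX dX) q + 1 else 0)"
      have "code_dim (hirz_code \<eta> dT dX :: ('a pt4 \<Rightarrow> 'a) set) = S + H"
        unfolding S_def H_def by (rule cd) (use e2 in auto)
      then have "real (code_dim (hirz_code \<eta> dT dX :: ('a pt4 \<Rightarrow> 'a) set)) = real_of_int (int S) + real_of_int (int H)"
        by simp
      also have "int S = (\<Sum>j\<in>{0..mm \<eta> dT dX q}. min (dl \<eta> dT dX - int \<eta> * int j) (int q) + 1)"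
        unfolding S_def by (rule sI)
      finally show ?thesis unfolding H_def .
    qed
    show "let q = int CARD('a);
               \<delta> = dT + int \<eta> * int dX;
               A = (if dT \<ge> 0 then real dX else real_of_int \<delta> / real \<eta>);
               m = min \<lfloor>A\<rfloor> (q - 1);
               h = (if dT \<ge> 0 \<and> q \<le> int dX then min dT q + 1 else 0);
               s = real_of_int (\<delta> - q) / real \<eta>;
               st = (if 0 \<le> s \<and> s \<le> real_of_int m then \<lfloor>s\<rfloor>
                     else if s < 0 then -1 else m)
           in real (code_dim (hirz_code \<eta> dT dX :: ('a pt4 \<Rightarrow> 'a) set))
              = real_of_int ((q + 1) * (st + 1))
                + real_of_int (m - st) * (real_of_int \<delta> + 1 - real \<eta> * real_of_int (m + st + 1) / 2)
                + real_of_int h"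
      unfolding Let_def q_def[symmetric] dl_def[symmetric] mI hI main
      using final_sum[OF e0, of "dl \<eta> dT dX" "int q" "mm \<eta> dT dX q"] by simp
  qed
qed

end
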